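(* Let $(\Omega,\mu)$ be a finite probability space, $0<\rho\le1/3$, $q\ge2$, and $f\colon\Omega^n\to\mathbb{R}$. Then \[\|T_{\rho/\sqrt q}f\|_q^q\le\sum_{S\subseteq[n]}\beta^{q|S|}q^{-q|S|/2}\,\mathbb{E}_{x\sim\mu^S}\|D_{S,x}f\|_2^q,\] where $\beta=\rho\left(1+\frac{2(q-2)}{\log(1/\rho)}\right)$.
   Context: Norms w.r.t. $\mu^n$ (over remaining coordinates for $D_{S,x}f$); $\log$ natural. $T_\rho f(x)=\mathbb{E}_y f(y)$ where $y$ keeps each $x_i$ independently with probability $\rho$ and otherwise resamples it from $\mu$. For $i\in[n]$, $E_i$ averages over coordinate $i$ according to $\mu$, $L_i=I-E_i$, $L_S=\prod_{i\in S}L_i$, and $D_{S,x}f=(L_Sf)_{S\to x}$, where $h_{S\to x}(y)=h(x,y)$. *)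

theory Defs
  imports "HOL-Analysis.Analysis"
begin

text \<open>Finite probability space: a finite nonempty set Om with weights mu.
 Points of Om^S are extensional functions in PiE S (\<lambda>_. Om).
 Coordinates are indexed by {0..<n}.\<close>

definition fin_prob_space :: "'a set \<Rightarrow> ('a \<Rightarrow> real) \<Rightarrow> bool" where
  "fin_prob_space Om mu \<longleftrightarrow> finite Om \<and> Om \<noteq> {} \<and> (\<forall>a\<in>Om. 0 \<le> mu a) \<and> sum mu Om = 1"

definition expS :: "'a set \<Rightarrow> ('a \<Rightarrow> real) \<Rightarrow> nat set \<Rightarrow> ((nat \<Rightarrow> 'a) \<Rightarrow> real) \<Rightarrow> real" where
  "expS Om mu S g = (\<Sum>x\<in>PiE S (\<lambda>_. Om). (\<Prod>i\<in>S. mu (x i)) * g x)"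

definition normq_pow :: "'a set \<Rightarrow> ('a \<Rightarrow> real) \<Rightarrow> nat set \<Rightarrow> real \<Rightarrow> ((nat \<Rightarrow> 'a) \<Rightarrow> real) \<Rightarrow> real" where
  "normq_pow Om mu S q g = expS Om mu S (\<lambda>x. \<bar>g x\<bar> powr q)"

definition norm2 :: "'a set \<Rightarrow> ('a \<Rightarrow> real) \<Rightarrow> nat set \<Rightarrow> ((nat \<Rightarrow> 'a) \<Rightarrow> real) \<Rightarrow> real" where
  "norm2 Om mu S g = sqrt (expS Om mu S (\<lambda>x. (g x)\<^sup>2))"

text \<open>Noise operator on Om^n: y keeps x_i w.p. rho, else resamples from mu.\<close>
definition noiseT :: "'a set \<Rightarrow> ('a \<Rightarrow> real) \<Rightarrow> nat \<Rightarrow> real \<Rightarrow> ((nat \<Rightarrow> 'a) \<Rightarrow> real) \<Rightarrow> (nat \<Rightarrow> 'a) \<Rightarrow> real" where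
  "noiseT Om mu n rho f x =
     (\<Sum>y\<in>PiE {0..<n} (\<lambda>_. Om).
        (\<Prod>i\<in>{0..<n}. rho * (if y i = x i then 1 else 0) + (1 - rho) * mu (y i)) * f y)"

definition avgE :: "'a set \<Rightarrow> ('a \<Rightarrow> real) \<Rightarrow> nat \<Rightarrow> ((nat \<Rightarrow> 'a) \<Rightarrow> real) \<Rightarrow> (nat \<Rightarrow> 'a) \<Rightarrow> real" where
  "avgE Om mu i f x = (\<Sum>a\<in>Om. mu a * f (x(i := a)))"

definition opL :: "'a set \<Rightarrow> ('a \<Rightarrow> real) \<Rightarrow> nat \<Rightarrow> ((nat \<Rightarrow> 'a) \<Rightarrow> real) \<Rightarrow> (nat \<Rightarrow> 'a) \<Rightarrow> real" where
  "opL Om mu i f x = f x - avgE Om mu i f x"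

text \<open>L_S = product of L_i over i in S (the L_i commute; we compose in increasing order).\<close>
definition opLS :: "'a set \<Rightarrow> ('a \<Rightarrow> real) \<Rightarrow> nat set \<Rightarrow> ((nat \<Rightarrow> 'a) \<Rightarrow> real) \<Rightarrow> (nat \<Rightarrow> 'a) \<Rightarrow> real" where
  "opLS Om mu S f = foldr (opL Om mu) (sorted_list_of_set S) f"

definition derivD :: "'a set \<Rightarrow> ('a \<Rightarrow> real) \<Rightarrow> nat set \<Rightarrow> (nat \<Rightarrow> 'a) \<Rightarrow> ((nat \<Rightarrow> 'a) \<Rightarrow> real) \<Rightarrow> (nat \<Rightarrow> 'a) \<Rightarrow> real" where
  "derivD Om mu S x f y = opLS Om mu S f (\<lambda>i. if i \<in> S then x i else y i)"

end

theory Submission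
  imports Defs
begin


lemma exp_m1_le: "0 \<le> (x::real) \<Longrightarrow> exp x - 1 \<le> x * exp x"
proof -
  assume "0 \<le> x"
  have "1 - x \<le> exp (-x)" using exp_ge_add_one_self[of "-x"] by simp
  hence "(1 - x) * exp x \<le> exp (-x) * exp x" by (simp add: mult_right_mono)
  also have "\<dots> = 1" by (simp add: exp_add[symmetric])
  finally show ?thesis by (simp add: algebra_simps)
qed

lemma scalarS:
  fixes u q rho :: real
  assumes q: "q \<ge> 2" and r0: "0 < rho" and r1: "rho \<le> 1/3"
  shows "\<bar>1+u\<bar> powr q \<le> 1 + q*u + (q^2/(2*rho^2))*u^2
           + (1 + 2*(q-2)/ln(1/rho)) powr q * \<bar>u\<bar> powr q"
proof -
  define L where "L = ln (1/rho)"
  define g where "g = 1 + 2*(q-2)/L"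
  define C where "C = q^2/(2*rho^2)"
  have L0: "L > 0" unfolding L_def using r0 r1 by simp
  have g1: "g \<ge> 1" unfolding g_def using L0 q by simp
  have gq: "g powr q \<ge> 1" using g1 q by (simp add: ge_one_powr_ge_zero)
  have rho2: "rho^2 \<le> 1/9" using r0 r1 power_mono[of rho "1/3" 2] by (simp add: power2_eq_square)
  have C9: "C \<ge> q^2 * (9/2)"
  proof -
    have "1/(2*rho^2) \<ge> 9/2" using rho2 r0 by (simp add: field_simps)
    thus ?thesis unfolding C_def using mult_left_mono[of "9/2" "1/(2*rho^2)" "q^2"] by (simp add: field_simps)
  qed
  have "q^2 \<le> q^2*(9/2)" by simp
  hence Cq: "C \<ge> q^2" using C9 by linarith
  have Cu2: "C*u^2 \<ge> q^2*u^2" using Cq by (simp add: mult_right_mono)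
  have main: "\<bar>1+u\<bar> powr q \<le> 1 + q*u + C*u^2 + g powr q * \<bar>u\<bar> powr q"
  proof (cases "u \<ge> 0")
    case True
    show ?thesis
    proof (cases "1+u \<le> g*u")
      case True2: True
      have "\<bar>1+u\<bar> powr q = (1+u) powr q" using True by simp
      also have "\<dots> \<le> (g*u) powr q" using True True2 q by (intro powr_mono2) auto
      also have "\<dots> = g powr q * \<bar>u\<bar> powr q" using True g1 by (simp add: powr_mult)
      moreover have "0 \<le> q*u" using True q by simp
      moreover have "0 \<le> C*u^2" using Cu2 by (smt (verit) mult_nonneg_nonneg zero_le_power2)
      ultimately show ?thesis by linarith
    next
      case False2: False
      define x where "x = (q-2)*u"
      have "(g-1)*u < 1" using False2 by (simp add: algebra_simps)
      hence "2*(q-2)*u/L < 1" unfolding g_def by simp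
      hence "2*x < L" unfolding x_def using L0 by (simp add: field_simps)
      moreover have x0: "x \<ge> 0" unfolding x_def using True q by simp
      ultimately have xL: "x \<le> L" by linarith
      define E where "E = exp x"
      have E1: "E \<le> 1/rho" unfolding E_def using xL r0 unfolding L_def
        by (metis exp_ln exp_le_cancel_iff r0 zero_less_divide_1_iff)
      have E0: "E \<ge> 1" unfolding E_def using x0 by simp
      define P where "P = (1+u) powr (q-2)"
      have "P = exp ((q-2) * ln (1+u))" unfolding P_def using True by (simp add: powr_def)
      also have "\<dots> \<le> E" unfolding E_def x_def using q True
        by (intro exp_mono mult_left_mono) (auto intro: ln_add_one_self_le_self)
      finally have PE: "P \<le> E" .
      have "(1+u) powr q = (1+u) powr (2 + (q-2))" by simp
      also have "\<dots> = (1+u)^2 * P" unfolding P_def using True by (subst powr_add) (simp add: powr_numeral)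
      finally have eq: "\<bar>1+u\<bar> powr q = (1+u)^2 * P" using True by simp
      have "(1+u)^2 * P \<le> (1+u)^2 * E" using PE by (simp add: mult_left_mono)
      have em: "E - 1 \<le> x * E" unfolding E_def using exp_m1_le[OF x0] .
      have a1: "E - 1 - x \<le> x^2 * E"
      proof -
        have "E - 1 - x \<le> x*(E-1)" using em by (simp add: algebra_simps)
        also have "\<dots> \<le> x*(x*E)" using em x0 by (simp add: mult_left_mono)
        finally show ?thesis by (simp add: power2_eq_square)
      qed
      have a2: "2*u*(E-1) \<le> 2*u*(x*E)" using em True by (simp add: mult_left_mono)
      have "(1+u)^2 * E - 1 - q*u = (E - 1 - x) + 2*u*(E-1) + u^2*E"
        unfolding x_def by (simp add: power2_eq_square algebra_simps)
      also have "\<dots> \<le> x^2*E + 2*u*(x*E) + u^2*E" using a1 a2 by simp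
      also have "\<dots> = E*((q-1)*u)^2" unfolding x_def by (simp add: power2_eq_square algebra_simps)
      also have "\<dots> \<le> (1/rho)*((q-1)*u)^2" using E1 by (intro mult_right_mono) auto
      also have "\<dots> \<le> (1/rho)*(q*u)^2" using q True
        by (intro mult_left_mono power_mono) (auto simp: r0 less_imp_le mult_right_mono)
      also have "\<dots> \<le> C*u^2"
      proof -
        have "2*rho^2 \<le> rho" using mult_left_mono[of "2*rho" 1 rho] r0 r1 by (simp add: power2_eq_square algebra_simps)
        hence "1/rho \<le> 1/(2*rho^2)" using r0 by (simp add: field_simps)
        hence "(1/rho)*(q*u)^2 \<le> (1/(2*rho^2))*(q*u)^2" by (intro mult_right_mono) auto
        thus ?thesis unfolding C_def by (simp add: power_mult_distrib)
      qed
      finally have "(1+u)^2 * E - 1 - q*u \<le> C*u^2" .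
      moreover have "(1+u)^2 * P \<le> (1+u)^2 * E" using PE by (simp add: mult_left_mono)
      moreover have "0 \<le> g powr q * \<bar>u\<bar> powr q" by simp
      ultimately show ?thesis using eq by linarith
    qed
  next
    case False
    show ?thesis
    proof (cases "u \<ge> -1")
      case True
      define v where "v = -u"
      have v0: "v > 0" "v \<le> 1" using False True unfolding v_def by auto
      have "\<bar>1+u\<bar> powr q = (1-v) powr q" using v0 unfolding v_def by simp
      also have "\<dots> \<le> exp (-v) powr q" using v0 q
        by (intro powr_mono2) (auto simp: exp_ge_add_one_self[of "-v", simplified] )
      also have "\<dots> = exp (q * (- v))" by (simp add: powr_def)
      also have "\<dots> \<le> 1/(1+q* v)"
      proof -
        have "1 + q* v \<le> exp (q* v)" by (rule exp_ge_add_one_self)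
        moreover have "0 < 1+q* v" using v0 q by (simp add: add_pos_nonneg)
        ultimately show ?thesis by (simp add: exp_minus field_simps)
      qed
      also have "\<dots> \<le> 1 - q* v + q^2* v^2"
      proof -
        have p: "0 < 1+q* v" using v0 q by (simp add: add_pos_nonneg)
        have "(1 - q* v + q^2* v^2)*(1+q* v) = 1 + (q* v)^3" by (simp add: power2_eq_square power3_eq_cube algebra_simps)
        also have "\<dots> \<ge> 1" using v0 q by simp
        finally show ?thesis using p by (simp add: field_simps)
      qed
      finally have h: "\<bar>1+u\<bar> powr q \<le> 1 + q*u + q^2*u^2" unfolding v_def by simp
      moreover have "0 \<le> g powr q * \<bar>u\<bar> powr q" by simp
      ultimately show ?thesis using Cu2 by linarith
    next
      case False2: False
      have "\<bar>1+u\<bar> powr q \<le> \<bar>u\<bar> powr q" using False2 q by (intro powr_mono2) auto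
      also have "\<dots> \<le> g powr q * \<bar>u\<bar> powr q" using gq mult_right_mono[of 1 "g powr q" "\<bar>u\<bar> powr q"] by simp
      finally have h1: "\<bar>1+u\<bar> powr q \<le> g powr q * \<bar>u\<bar> powr q" .
      have "q^2*u^2 \<ge> q*(-u)"
      proof -
        have w1: "1 \<le> q*(-u)" using mult_mono[of 1 q 1 "-u"] False2 q by simp
        have "q*(-u)*1 \<le> (q*(-u))*(q*(-u))" using w1 by (intro mult_left_mono) auto
        hence "q*(-u) \<le> (q*(-u))*(q*(-u))" by simp
        thus ?thesis by (simp add: power2_eq_square algebra_simps)
      qed
      thus ?thesis using h1 Cu2 by linarith
    qed
  qed
  thus ?thesis unfolding C_def g_def L_def .
qed



lemma bern:
  fixes a t m :: real
  assumes a: "a > 0" and t: "t \<ge> 0" and m: "m \<ge> 1"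
  shows "a powr m + m * a powr (m-1) * t \<le> (a + t) powr m"
proof -
  have "(\<lambda>x. x powr m) (a+t) - (\<lambda>x. x powr m) a \<ge> (m * a powr (m-1)) * ((a+t) - a)"
  proof (rule convex_on_imp_above_tangent[where A="{0<..}"])
    show "convex_on {0<..} (\<lambda>x. x powr m)" using powr_convex[OF m] .
    show "connected ({0<..} :: real set)" by simp
    show "a \<in> interior {0<..}" using a by (simp add: interior_open)
    show "a + t \<in> {0<..}" using a t by simp
    show "((\<lambda>x. x powr m) has_real_derivative m * a powr (m - 1)) (at a within {0<..})"
      using has_real_derivative_powr[OF a] by (rule has_field_derivative_at_within)
  qed
  thus ?thesis by simp
qed

lemma pconv:
  fixes a b t m :: real
  assumes a: "a \<ge> 0" and b: "b \<ge> 0" and t0: "0 \<le> t" and t1: "t \<le> 1" and m: "m \<ge> 1"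
  shows "((1-t)* a + t* b) powr m \<le> (1-t) * a powr m + t * b powr m"
proof -
  have tm: "s powr m \<le> s" if "0 \<le> s" "s \<le> 1" for s :: real
    using powr_mono'[of 1 m s] that m by simp
  consider "a > 0 \<and> b > 0" | "a = 0" | "b = 0" using a b by linarith
  thus ?thesis
  proof cases
    case 1
    have "((1-t) *\<^sub>R a + t *\<^sub>R b) powr m \<le> (1-t) * a powr m + t * b powr m"
      using convex_onD[OF powr_convex[OF m], of t a b] 1 t0 t1 by simp
    thus ?thesis by simp
  next
    case 2
    have "(t* b) powr m = t powr m * b powr m" by (simp add: powr_mult)
    also have "\<dots> \<le> t * b powr m" using tm[OF t0 t1] by (intro mult_right_mono) auto
    finally show ?thesis using 2 by simp
  next
    case 3
    have "((1-t)* a) powr m = (1-t) powr m * a powr m" by (simp add: powr_mult)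
    also have "\<dots> \<le> (1-t) * a powr m" using tm[of "1-t"] t0 t1 by (intro mult_right_mono) auto
    finally show ?thesis using 3 by simp
  qed
qed

lemma sq_powr_half: "((z::real)^2) powr (q/2) = \<bar>z\<bar> powr q"
proof -
  have "z^2 = \<bar>z\<bar> powr 2" by simp
  hence "(z^2) powr (q/2) = (\<bar>z\<bar> powr 2) powr (q/2)" by simp
  also have "\<dots> = \<bar>z\<bar> powr (2*(q/2))" by (rule powr_powr)
  also have "\<dots> = \<bar>z\<bar> powr q" by simp
  finally show ?thesis .
qed

lemma normN:
  fixes x1 s q rho :: real
  assumes xs: "\<bar>x1\<bar> \<le> s" and q: "q \<ge> 2" and r0: "0 < rho" and r1: "rho \<le> 1/3"
  shows "(1 + 2* x1 + s^2) powr (q/2) \<le> 1 + q* x1 + (q^2/(2* rho^2))* s^2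
           + (1 + 2*(q-2)/ln(1/rho)) powr q * s powr q"
proof -
  define C where "C = q^2/(2* rho^2)"
  define G where "G = (1 + 2*(q-2)/ln(1/rho)) powr q"
  have s0: "s \<ge> 0" using xs by linarith
  have main: "(1 + 2* x1 + s^2) powr (q/2) \<le> 1 + q* x1 + C* s^2 + G * s powr q"
  proof (cases "s = 0")
    case True
    then have "x1 = 0" using xs by simp
    thus ?thesis using True by simp
  next
    case False
    hence sp: "s > 0" using s0 by simp
    define t where "t = (x1 + s)/(2* s)"
    have t0: "0 \<le> t" unfolding t_def using xs sp by simp
    have t1: "t \<le> 1" unfolding t_def using xs sp by simp
    have xe: "s*(2* t-1) = x1" unfolding t_def using sp by (simp add: field_simps)
    have be: "1 + 2* x1 + s^2 = (1-t)*(1-s)^2 + t*(1+s)^2"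
      unfolding xe[symmetric] by (simp add: power2_eq_square algebra_simps)
    have "(1 + 2* x1 + s^2) powr (q/2) \<le> (1-t)*((1-s)^2) powr (q/2) + t*((1+s)^2) powr (q/2)"
      unfolding be using q t0 t1 by (intro pconv) auto
    also have "\<dots> = (1-t)*\<bar>1+(-s)\<bar> powr q + t*\<bar>1+s\<bar> powr q" by (simp add: sq_powr_half)
    also have "\<dots> \<le> (1-t)*(1 + q*(-s) + C*(-s)^2 + G*\<bar>-s\<bar> powr q) + t*(1 + q* s + C* s^2 + G*\<bar>s\<bar> powr q)"
      unfolding C_def G_def using scalarS[OF q r0 r1, of "-s"] scalarS[OF q r0 r1, of s] t0 t1
      by (intro add_mono mult_left_mono) auto
    also have "\<dots> = 1 + q*(s*(2* t-1)) + C* s^2 + G * s powr q" using s0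
      by (simp add: power2_eq_square algebra_simps)
    finally show ?thesis unfolding xe .
  qed
  thus ?thesis unfolding C_def G_def .
qed



lemma expand_aux: "(P::real) * (1 + q * (r * p / a2) + C * (r^2 * s2 / a2) + G * S)
  = P + q * r * (P / a2) * p + (C * r^2) * (P / a2) * s2 + G * (P * S)"
  by (simp add: algebra_simps)

lemma vecV:
  fixes a2 s2 p q rho :: real
  assumes a2: "a2 > 0" and s2: "s2 \<ge> 0" and cs: "p^2 \<le> a2 * s2"
    and q: "q \<ge> 2" and r0: "0 < rho" and r1: "rho \<le> 1/3"
  shows "(a2 + 2 * (rho/sqrt q) * p + (rho/sqrt q)^2 * s2) powr (q/2)
    \<le> a2 powr (q/2) + q * (rho/sqrt q) * (a2 powr (q/2-1)) * p + (q/2) * (a2 powr (q/2-1)) * s2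
       + ((rho * (1 + 2 * (q-2)/ln(1/rho))) powr q * q powr (-q/2)) * s2 powr (q/2)"
proof -
  define r where "r = rho/sqrt q"
  define g where "g = 1 + 2 * (q-2)/ln(1/rho)"
  define C where "C = q^2/(2 * rho^2)"
  define m where "m = q/2"
  have q0: "q > 0" using q by simp
  have r2: "r^2 = rho^2/q"
  proof -
    have "r^2 = rho^2/(sqrt q)^2" unfolding r_def by (rule power_divide)
    moreover have "(sqrt q)^2 = q" using q0 by simp
    ultimately show ?thesis by simp
  qed
  have rpos: "r > 0" unfolding r_def using r0 q0 by simp
  define x1 where "x1 = r * p / a2"
  define s where "s = sqrt (r^2 * s2 / a2)"
  have nn: "0 \<le> r^2 * s2 / a2" using a2 s2 by simp
  have ss: "s^2 = r^2 * s2 / a2" unfolding s_def using nn by simp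
  have s0: "s \<ge> 0" unfolding s_def using nn by simp
  have "x1^2 = r^2 * p^2 / a2^2" unfolding x1_def by (simp only: power_divide power_mult_distrib)
  also have "\<dots> \<le> r^2 * (a2 * s2) / a2^2" using cs a2 by (intro divide_right_mono mult_left_mono) auto
  also have "\<dots> = s^2" unfolding ss using a2 by (simp add: power2_eq_square field_simps)
  finally have "x1^2 \<le> s^2" .
  hence xs: "\<bar>x1\<bar> \<le> s" using s0 abs_le_square_iff[of x1 s] by simp
  have B0: "1 + 2 * x1 + s^2 \<ge> 0"
  proof -
    have "0 \<le> (1-s)^2" by simp
    also have "\<dots> = 1 - 2 * s + s^2" by (simp add: power2_eq_square algebra_simps)
    also have "\<dots> \<le> 1 + 2 * x1 + s^2" using xs by simp
    finally show ?thesis .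
  qed
  have base: "a2 + 2 * r * p + r^2 * s2 = a2 * (1 + 2 * x1 + s^2)"
    unfolding ss x1_def using a2 by (simp add: field_simps)
  have N: "(1 + 2 * x1 + s^2) powr m \<le> 1 + q * x1 + C * s^2 + g powr q * s powr q"
    unfolding C_def g_def m_def by (rule normN[OF xs q r0 r1])
  have "(a2 + 2 * r * p + r^2 * s2) powr m = a2 powr m * (1 + 2 * x1 + s^2) powr m"
    unfolding base by (rule powr_mult)
  also have "\<dots> \<le> a2 powr m * (1 + q * x1 + C * s^2 + g powr q * s powr q)"
    using N by (intro mult_left_mono) auto
  also have "\<dots> = a2 powr m + q * r * (a2 powr m / a2) * p + (C * r^2) * (a2 powr m / a2) * s2
       + g powr q * (a2 powr m * s powr q)"
    unfolding x1_def ss by (rule expand_aux)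
  also have "\<dots> = a2 powr m + q * r * (a2 powr (m-1)) * p + (q/2) * (a2 powr (m-1)) * s2
       + ((rho * g) powr q * q powr (-q/2)) * s2 powr m"
  proof -
    have e1: "a2 powr m / a2 = a2 powr (m-1)" using a2 by (simp add: powr_diff)
    have e2: "C * r^2 = q/2" unfolding C_def r2 using r0 q0 by (simp add: field_simps power2_eq_square)
    have "s powr q = (s^2) powr m" unfolding m_def using sq_powr_half[of s q] s0 by simp
    also have "\<dots> = (r^2) powr m * s2 powr m / a2 powr m" unfolding ss
      by (simp add: powr_divide powr_mult)
    finally have "a2 powr m * s powr q = (r^2) powr m * s2 powr m" using a2 by simp
    moreover have "(r^2) powr m = rho powr q * q powr (-q/2)"
    proof -
      have "(r^2) powr m = r powr q" unfolding m_def using sq_powr_half[of r q] rpos by simp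
      also have "\<dots> = rho powr q / (sqrt q) powr q" unfolding r_def by (simp add: powr_divide)
      also have "(sqrt q) powr q = q powr (q/2)"
      proof -
        have "sqrt q = q powr (1/2)" using q0 by (simp add: powr_half_sqrt)
        hence "(sqrt q) powr q = q powr (1/2 * q)" by (simp add: powr_powr)
        thus ?thesis by simp
      qed
      also have "rho powr q / q powr (q/2) = rho powr q * q powr (-q/2)"
      proof -
        have "-q/2 = -(q/2)" by simp
        hence "q powr (-q/2) = inverse (q powr (q/2))" using powr_minus[of q "q/2"] by metis
        thus ?thesis by (simp only: divide_inverse)
      qed
      finally show ?thesis .
    qed
    ultimately have e3: "g powr q * (a2 powr m * s powr q) = ((rho * g) powr q * q powr (-q/2)) * s2 powr m"
      by (simp only: powr_mult[of rho g q] powr_mult[of g rho q] ac_simps)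
    show ?thesis unfolding e1 e2 e3 ..
  qed
  finally show ?thesis unfolding r_def g_def m_def .
qed



lemma wCS:
  fixes w a b :: "'b \<Rightarrow> real"
  assumes "\<forall>y\<in>Y. w y \<ge> 0"
  shows "(\<Sum>y\<in>Y. w y * a y * b y)^2 \<le> (\<Sum>y\<in>Y. w y * (a y)^2) * (\<Sum>y\<in>Y. w y * (b y)^2)"
proof -
  have "(\<Sum>y\<in>Y. (sqrt (w y) * a y) * (sqrt (w y) * b y))^2
     \<le> (\<Sum>y\<in>Y. (sqrt (w y) * a y)^2) * (\<Sum>y\<in>Y. (sqrt (w y) * b y)^2)"
    by (rule Cauchy_Schwarz_ineq_sum)
  moreover have "(\<Sum>y\<in>Y. (sqrt (w y) * a y) * (sqrt (w y) * b y)) = (\<Sum>y\<in>Y. w y * a y * b y)"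
    using assms by (intro sum.cong) (auto simp: algebra_simps)
  moreover have "\<And>c. (\<Sum>y\<in>Y. (sqrt (w y) * c y)^2) = (\<Sum>y\<in>Y. w y * (c y)^2)"
    using assms by (intro sum.cong) (auto simp: power_mult_distrib)
  ultimately show ?thesis by simp
qed

lemma KEY:
  fixes Y :: "'b set" and w :: "'b \<Rightarrow> real" and Om :: "'c set" and mu :: "'c \<Rightarrow> real"
    and U :: "'b \<Rightarrow> 'c \<Rightarrow> real" and q rho :: real
  assumes fY: "finite Y" and fO: "finite Om" and w0: "\<forall>y\<in>Y. w y \<ge> 0"
    and mu0: "\<forall>c\<in>Om. mu c \<ge> 0" and mu1: "sum mu Om = 1"
    and q: "q \<ge> 2" and r0: "0 < rho" and r1: "rho \<le> 1/3"
  shows "(\<Sum>c\<in>Om. mu c * (\<Sum>y\<in>Y. w y * ((rho/sqrt q) * U y c + (1 - rho/sqrt q) * (\<Sum>b\<in>Om. mu b * U y b))^2) powr (q/2))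
     \<le> (\<Sum>c\<in>Om. mu c * (\<Sum>y\<in>Y. w y * (U y c)^2)) powr (q/2)
       + ((rho * (1 + 2 * (q-2)/ln(1/rho))) powr q * q powr (-q/2))
         * (\<Sum>c\<in>Om. mu c * (\<Sum>y\<in>Y. w y * (U y c - (\<Sum>b\<in>Om. mu b * U y b))^2) powr (q/2))"
proof -
  define r where "r = rho/sqrt q"
  define K where "K = (rho * (1 + 2 * (q-2)/ln(1/rho))) powr q * q powr (-q/2)"
  define A where "A = (\<lambda>y. \<Sum>b\<in>Om. mu b * U y b)"
  define B where "B = (\<lambda>y c. U y c - A y)"
  define a2 where "a2 = (\<Sum>y\<in>Y. w y * (A y)^2)"
  define s2 where "s2 = (\<lambda>c. \<Sum>y\<in>Y. w y * (B y c)^2)"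
  define p where "p = (\<lambda>c. \<Sum>y\<in>Y. w y * A y * B y c)"
  define m where "m = q/2"
  have m1: "m \<ge> 1" unfolding m_def using q by simp
  have a20: "a2 \<ge> 0" unfolding a2_def using w0 by (intro sum_nonneg) auto
  have s20: "s2 c \<ge> 0" for c unfolding s2_def using w0 by (intro sum_nonneg) auto
  have e1: "(\<Sum>y\<in>Y. w y * (r * U y c + (1 - r) * A y)^2) = a2 + 2 * r * p c + r^2 * s2 c" for c
  proof -
    have "(\<Sum>y\<in>Y. w y * (r * U y c + (1 - r) * A y)^2)
       = (\<Sum>y\<in>Y. w y * (A y)^2 + 2 * r * (w y * A y * B y c) + r^2 * (w y * (B y c)^2))"
      by (intro sum.cong) (auto simp: B_def power2_eq_square algebra_simps)
    also have "\<dots> = a2 + 2 * r * p c + r^2 * s2 c"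
      unfolding a2_def p_def s2_def by (simp add: sum.distrib sum_distrib_left)
    finally show ?thesis .
  qed
  have Bz: "(\<Sum>c\<in>Om. mu c * B y c) = 0" for y
  proof -
    have "(\<Sum>c\<in>Om. mu c * B y c) = (\<Sum>c\<in>Om. mu c * U y c) - (\<Sum>c\<in>Om. mu c) * A y"
      unfolding B_def by (simp add: algebra_simps sum_subtractf sum_distrib_right sum_distrib_left)
    thus ?thesis unfolding mu1 A_def by simp
  qed
  have e2: "(\<Sum>c\<in>Om. mu c * p c) = 0"
  proof -
    have "(\<Sum>c\<in>Om. mu c * p c) = (\<Sum>c\<in>Om. \<Sum>y\<in>Y. (w y * A y) * (mu c * B y c))"
      unfolding p_def by (simp add: sum_distrib_left algebra_simps)
    also have "\<dots> = (\<Sum>y\<in>Y. (w y * A y) * (\<Sum>c\<in>Om. mu c * B y c))"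
      by (subst sum.swap) (simp add: sum_distrib_left)
    also have "\<dots> = 0" using Bz by simp
    finally show ?thesis .
  qed
  have e3: "(\<Sum>c\<in>Om. mu c * (\<Sum>y\<in>Y. w y * (U y c)^2)) = a2 + (\<Sum>c\<in>Om. mu c * s2 c)"
  proof -
    have "(\<Sum>c\<in>Om. mu c * (\<Sum>y\<in>Y. w y * (U y c)^2))
      = (\<Sum>c\<in>Om. \<Sum>y\<in>Y. mu c * (w y * (A y)^2) + 2 * (w y * A y) * (mu c * B y c) + mu c * (w y * (B y c)^2))"
      by (intro sum.cong refl) (auto simp: sum_distrib_left B_def power2_eq_square algebra_simps)
    also have "\<dots> = (\<Sum>c\<in>Om. mu c) * a2 + 2 * (\<Sum>y\<in>Y. (w y * A y) * (\<Sum>c\<in>Om. mu c * B y c)) + (\<Sum>c\<in>Om. mu c * s2 c)"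
      unfolding a2_def s2_def
      by (simp add: sum.distrib sum_distrib_left sum_distrib_right sum.swap[of _ Om Y] algebra_simps)
    also have "\<dots> = a2 + (\<Sum>c\<in>Om. mu c * s2 c)" using Bz mu1 by simp
    finally show ?thesis .
  qed
  have cs: "(p c)^2 \<le> a2 * s2 c" for c unfolding p_def a2_def s2_def by (rule wCS[OF w0])
  have LHS: "(\<Sum>c\<in>Om. mu c * (\<Sum>y\<in>Y. w y * (r * U y c + (1 - r) * A y)^2) powr m)
     = (\<Sum>c\<in>Om. mu c * (a2 + 2 * r * p c + r^2 * s2 c) powr m)" using e1 by simp
  have main: "(\<Sum>c\<in>Om. mu c * (a2 + 2 * r * p c + r^2 * s2 c) powr m)
     \<le> (a2 + (\<Sum>c\<in>Om. mu c * s2 c)) powr m + K * (\<Sum>c\<in>Om. mu c * s2 c powr m)"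
  proof (cases "a2 = 0")
    case True
    have pc: "p c = 0" for c using cs[of c] True by simp
    have Kge: "(r^2) powr m \<le> K"
    proof -
      define g where "g = 1 + 2 * (q-2)/ln(1/rho)"
      have g1: "g \<ge> 1" unfolding g_def using q r0 r1 by simp
      have "(r^2) powr m = r powr q" unfolding m_def using sq_powr_half[of r q] r0 q
        by (simp add: r_def)
      also have "\<dots> = rho powr q / (sqrt q) powr q" unfolding r_def by (rule powr_divide)
      also have "\<dots> \<le> (rho * g) powr q / (sqrt q) powr q"
        using g1 r0 q by (intro divide_right_mono powr_mono2) (auto intro: mult_right_mono[of 1 g rho, simplified])
      also have "(sqrt q) powr q = q powr (q/2)"
      proof -
        have "sqrt q = q powr (1/2)" using q by (simp add: powr_half_sqrt)
        hence "(sqrt q) powr q = q powr (1/2 * q)" by (simp add: powr_powr)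
        thus ?thesis by simp
      qed
      also have "(rho * g) powr q / q powr (q/2) = K"
      proof -
        have "-q/2 = -(q/2)" by simp
        hence "q powr (-q/2) = inverse (q powr (q/2))" using powr_minus[of q "q/2"] by metis
        thus ?thesis unfolding K_def g_def by (simp only: divide_inverse)
      qed
      finally show ?thesis .
    qed
    have "(\<Sum>c\<in>Om. mu c * (a2 + 2 * r * p c + r^2 * s2 c) powr m) = (\<Sum>c\<in>Om. mu c * ((r^2) powr m * s2 c powr m))"
      using True pc by (simp add: powr_mult)
    also have "\<dots> \<le> (\<Sum>c\<in>Om. mu c * (K * s2 c powr m))"
      using mu0 Kge by (intro sum_mono mult_left_mono mult_right_mono) auto
    also have "\<dots> = K * (\<Sum>c\<in>Om. mu c * s2 c powr m)" by (simp add: sum_distrib_left algebra_simps)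
    also have "\<dots> \<le> (a2 + (\<Sum>c\<in>Om. mu c * s2 c)) powr m + K * (\<Sum>c\<in>Om. mu c * s2 c powr m)" by simp
    finally show ?thesis .
  next
    case False
    hence a2p: "a2 > 0" using a20 by simp
    have V: "(a2 + 2 * r * p c + r^2 * s2 c) powr m \<le> a2 powr m + q * r * (a2 powr (m-1)) * p c
        + (q/2) * (a2 powr (m-1)) * s2 c + K * s2 c powr m" for c
      unfolding r_def K_def m_def by (rule vecV[OF a2p s20 cs q r0 r1])
    have "(\<Sum>c\<in>Om. mu c * (a2 + 2 * r * p c + r^2 * s2 c) powr m)
       \<le> (\<Sum>c\<in>Om. mu c * (a2 powr m + q * r * (a2 powr (m-1)) * p c
        + (q/2) * (a2 powr (m-1)) * s2 c + K * s2 c powr m))"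
      using mu0 V by (intro sum_mono mult_left_mono) auto
    also have "\<dots> = (\<Sum>c\<in>Om. mu c) * a2 powr m + q * r * (a2 powr (m-1)) * (\<Sum>c\<in>Om. mu c * p c)
        + (q/2) * (a2 powr (m-1)) * (\<Sum>c\<in>Om. mu c * s2 c) + K * (\<Sum>c\<in>Om. mu c * s2 c powr m)"
      by (simp add: sum.distrib sum_distrib_left sum_distrib_right algebra_simps)
    also have "\<dots> = a2 powr m + m * a2 powr (m-1) * (\<Sum>c\<in>Om. mu c * s2 c) + K * (\<Sum>c\<in>Om. mu c * s2 c powr m)"
      unfolding mu1 e2 m_def by simp
    also have "\<dots> \<le> (a2 + (\<Sum>c\<in>Om. mu c * s2 c)) powr m + K * (\<Sum>c\<in>Om. mu c * s2 c powr m)"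
    proof -
      have "0 \<le> (\<Sum>c\<in>Om. mu c * s2 c)" using mu0 s20 by (intro sum_nonneg) auto
      from bern[OF a2p this m1] show ?thesis by simp
    qed
    finally show ?thesis .
  qed
  have "(\<Sum>c\<in>Om. mu c * (\<Sum>y\<in>Y. w y * (r * U y c + (1 - r) * A y)^2) powr m)
     \<le> (\<Sum>c\<in>Om. mu c * (\<Sum>y\<in>Y. w y * (U y c)^2)) powr m
       + K * (\<Sum>c\<in>Om. mu c * (\<Sum>y\<in>Y. w y * (U y c - A y)^2) powr m)"
    using LHS main e3 unfolding s2_def B_def by simp
  then show ?thesis unfolding r_def K_def A_def m_def .
qed



lemma avgE_comm: "avgE Om mu i (avgE Om mu j g) = avgE Om mu j (avgE Om mu i g)"
proof (cases "i = j")
  case True thus ?thesis by simp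
next
  case False
  show ?thesis
  proof
    fix x
    have "avgE Om mu i (avgE Om mu j g) x = (\<Sum>a\<in>Om. \<Sum>b\<in>Om. mu a * (mu b * g (x(i := a, j := b))))"
      unfolding avgE_def by (simp add: sum_distrib_left)
    also have "\<dots> = (\<Sum>b\<in>Om. \<Sum>a\<in>Om. mu a * (mu b * g (x(i := a, j := b))))" by (rule sum.swap)
    also have "\<dots> = avgE Om mu j (avgE Om mu i g) x"
      unfolding avgE_def using False by (simp add: sum_distrib_left fun_upd_twist algebra_simps)
    finally show "avgE Om mu i (avgE Om mu j g) x = avgE Om mu j (avgE Om mu i g) x" .
  qed
qed

lemma avgE_diff: "avgE Om mu i (\<lambda>z. a z - b z) x = avgE Om mu i a x - avgE Om mu i b x"
  unfolding avgE_def by (simp add: sum_subtractf right_diff_distrib)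

lemma opL_fun: "opL Om mu j g = (\<lambda>z. g z - avgE Om mu j g z)"
  by (rule ext) (simp add: opL_def)

lemma opL_comm: "opL Om mu i (opL Om mu j g) = opL Om mu j (opL Om mu i g)"
proof
  fix x
  show "opL Om mu i (opL Om mu j g) x = opL Om mu j (opL Om mu i g) x"
    apply (subst (1 2) opL_def)
    apply (simp only: opL_fun avgE_diff)
    apply (simp add: opL_def avgE_comm[of Om mu i j g])
    done
qed

lemma foldr_insort: "foldr (opL Om mu) (insort j xs) f = opL Om mu j (foldr (opL Om mu) xs f)"
  by (induction xs) (auto simp: opL_comm)

lemma opLS_empty[simp]: "opLS Om mu {} f = f"
  unfolding opLS_def by simp

lemma opLS_insert:
  assumes "finite S" "j \<notin> S"
  shows "opLS Om mu (insert j S) f = opL Om mu j (opLS Om mu S f)"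
  unfolding opLS_def using assms by (simp add: sorted_list_of_set_insert foldr_insort)

lemma opL_lin: "opL Om mu i (\<lambda>z. a * g z + b * h z) = (\<lambda>z. a * opL Om mu i g z + b * opL Om mu i h z)"
  by (rule ext) (simp add: opL_def avgE_def sum.distrib sum_distrib_left algebra_simps)

lemma opLS_lin:
  assumes "finite S"
  shows "opLS Om mu S (\<lambda>z. a * g z + b * h z) = (\<lambda>z. a * opLS Om mu S g z + b * opLS Om mu S h z)"
  using assms
proof (induction S rule: finite_induct)
  case empty thus ?case by simp
next
  case (insert x F)
  thus ?case by (simp add: opLS_insert opL_lin)
qed

lemma opL_subst: "i \<noteq> j \<Longrightarrow> opL Om mu i (\<lambda>y. G (y(j := c))) = (\<lambda>z. opL Om mu i G (z(j := c)))"
  by (rule ext) (simp add: opL_def avgE_def fun_upd_twist)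

lemma opLS_subst:
  assumes "finite S" "j \<notin> S"
  shows "opLS Om mu S (\<lambda>y. g (y(j := c))) = (\<lambda>z. opLS Om mu S g (z(j := c)))"
  using assms
proof (induction S rule: finite_induct)
  case empty thus ?case by simp
next
  case (insert x F)
  hence "x \<noteq> j" by auto
  have e: "opL Om mu x (\<lambda>y. opLS Om mu F g (y(j := c))) = (\<lambda>z. opL Om mu x (opLS Om mu F g) (z(j := c)))"
    by (rule opL_subst[OF \<open>x \<noteq> j\<close>])
  have "opLS Om mu (insert x F) (\<lambda>y. g (y(j := c))) = opL Om mu x (opLS Om mu F (\<lambda>y. g (y(j := c))))"
    by (rule opLS_insert[OF insert(1) insert(2)])
  also have "\<dots> = opL Om mu x (\<lambda>y. opLS Om mu F g (y(j := c)))"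
    using insert.IH insert.prems by (simp only: insert_iff) metis
  also have "\<dots> = (\<lambda>z. opL Om mu x (opLS Om mu F g) (z(j := c)))" by (rule e)
  also have "\<dots> = (\<lambda>z. opLS Om mu (insert x F) g (z(j := c)))" by (simp only: opLS_insert[OF insert(1) insert(2)])
  finally show ?case .
qed

lemma avgE_opL: "avgE Om mu j (opL Om mu i g) = opL Om mu i (avgE Om mu j g)"
proof
  fix x show "avgE Om mu j (opL Om mu i g) x = opL Om mu i (avgE Om mu j g) x"
    by (simp only: opL_fun avgE_diff) (simp add: avgE_comm[of Om mu i j g])
qed

lemma avgE_opLS:
  assumes "finite S"
  shows "avgE Om mu j (opLS Om mu S g) = opLS Om mu S (avgE Om mu j g)"
  using assms
proof (induction S rule: finite_induct)
  case empty thus ?case by simp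
next
  case (insert x F)
  thus ?case by (simp add: opLS_insert avgE_opL)
qed



lemma sum_PiE_insert:
  assumes "j \<notin> I"
  shows "(\<Sum>y\<in>PiE (insert j I) (\<lambda>_. Om). h y) = (\<Sum>b\<in>Om. \<Sum>y\<in>PiE I (\<lambda>_. Om). h (y(j := b)))"
proof -
  have "(\<Sum>y\<in>PiE (insert j I) (\<lambda>_. Om). h y) = (\<Sum>y\<in>(\<lambda>(y, g). g(j := y)) ` (Om \<times> PiE I (\<lambda>_. Om)). h y)"
    by (simp add: PiE_insert_eq)
  also have "\<dots> = (\<Sum>(b, y)\<in>Om \<times> PiE I (\<lambda>_. Om). h (y(j := b)))"
    using inj_combinator[OF assms, of "\<lambda>_. Om"] by (subst sum.reindex) (auto simp: case_prod_beta)
  also have "\<dots> = (\<Sum>b\<in>Om. \<Sum>y\<in>PiE I (\<lambda>_. Om). h (y(j := b)))"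
    by (rule sum.cartesian_product[symmetric])
  finally show ?thesis .
qed

lemma prod_insert_upd:
  assumes "finite I" "j \<notin> I"
  shows "(\<Prod>i\<in>insert j I. F i ((y(j := b)) i)) = F j b * (\<Prod>i\<in>I. F i (y i))"
proof -
  have "(\<Prod>i\<in>I. F i ((y(j := b)) i)) = (\<Prod>i\<in>I. F i (y i))"
    using assms by (intro prod.cong) auto
  thus ?thesis using assms by simp
qed

lemma expS_insert:
  assumes "finite I" "j \<notin> I"
  shows "expS Om mu (insert j I) g = (\<Sum>c\<in>Om. mu c * expS Om mu I (\<lambda>x. g (x(j := c))))"
proof -
  have "expS Om mu (insert j I) g = (\<Sum>c\<in>Om. \<Sum>x\<in>PiE I (\<lambda>_. Om). (\<Prod>i\<in>insert j I. mu ((x(j := c)) i)) * g (x(j := c)))"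
    unfolding expS_def by (rule sum_PiE_insert[OF assms(2)])
  also have "\<dots> = (\<Sum>c\<in>Om. \<Sum>x\<in>PiE I (\<lambda>_. Om). mu c * ((\<Prod>i\<in>I. mu (x i)) * g (x(j := c))))"
    using prod_insert_upd[OF assms, of "\<lambda>i. mu"] by (simp add: algebra_simps)
  also have "\<dots> = (\<Sum>c\<in>Om. mu c * expS Om mu I (\<lambda>x. g (x(j := c))))"
    unfolding expS_def by (simp add: sum_distrib_left)
  finally show ?thesis .
qed

lemma expS_mono:
  assumes "\<forall>a\<in>Om. mu a \<ge> 0" "\<And>x. x \<in> PiE S (\<lambda>_. Om) \<Longrightarrow> g x \<le> h x"
  shows "expS Om mu S g \<le> expS Om mu S h"
  unfolding expS_def
proof (intro sum_mono mult_left_mono)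
  fix x assume x: "x \<in> PiE S (\<lambda>_. Om)"
  thus "g x \<le> h x" by (rule assms(2))
  show "0 \<le> (\<Prod>i\<in>S. mu (x i))" using x assms(1) by (intro prod_nonneg) (auto simp: PiE_iff)
qed

lemma expS_nonneg:
  assumes "\<forall>a\<in>Om. mu a \<ge> 0" "\<And>x. x \<in> PiE S (\<lambda>_. Om) \<Longrightarrow> 0 \<le> g x"
  shows "0 \<le> expS Om mu S g"
  using expS_mono[OF assms(1), of S "\<lambda>_. 0" g] assms(2) by (simp add: expS_def)

lemma expS_sum: "expS Om mu S (\<lambda>x. \<Sum>c\<in>C. G c x) = (\<Sum>c\<in>C. expS Om mu S (G c))"
  unfolding expS_def by (simp add: sum_distrib_left sum.swap[of _ C])

lemma expS_lin: "expS Om mu S (\<lambda>x. a * g x + b * h x) = a * expS Om mu S g + b * expS Om mu S h"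
  unfolding expS_def by (simp add: sum.distrib sum_distrib_left algebra_simps)

lemma expS_cmult: "expS Om mu S (\<lambda>x. a * g x) = a * expS Om mu S g"
  unfolding expS_def by (simp add: sum_distrib_left algebra_simps)

definition noiseI :: "'a set \<Rightarrow> ('a \<Rightarrow> real) \<Rightarrow> nat set \<Rightarrow> real \<Rightarrow> ((nat \<Rightarrow> 'a) \<Rightarrow> real) \<Rightarrow> (nat \<Rightarrow> 'a) \<Rightarrow> real" where
  "noiseI Om mu I r f x =
     (\<Sum>y\<in>PiE I (\<lambda>_. Om).
        (\<Prod>i\<in>I. r * (if y i = x i then 1 else 0) + (1 - r) * mu (y i)) * f y)"

lemma noiseT_I: "noiseT Om mu n r f = noiseI Om mu {0..<n} r f"
  unfolding noiseT_def noiseI_def by (rule ext) simp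

lemma noise_insert:
  assumes fI: "finite I" and jI: "j \<notin> I" and c: "c \<in> Om" and fO: "finite Om"
  shows "noiseI Om mu (insert j I) r f (x(j := c))
       = noiseI Om mu I r (\<lambda>y. r * f (y(j := c)) + (1 - r) * avgE Om mu j f y) x"
proof -
  define k where "k = (\<lambda>(i::nat) (b::'a) (e::'a). r * (if b = e then 1 else 0) + (1 - r) * mu b)"
  have "noiseI Om mu (insert j I) r f (x(j := c))
     = (\<Sum>b\<in>Om. \<Sum>y\<in>PiE I (\<lambda>_. Om). (\<Prod>i\<in>insert j I. k i ((y(j := b)) i) ((x(j := c)) i)) * f (y(j := b)))"
    unfolding noiseI_def k_def by (rule sum_PiE_insert[OF jI])
  also have "\<dots> = (\<Sum>b\<in>Om. \<Sum>y\<in>PiE I (\<lambda>_. Om). k j b c * ((\<Prod>i\<in>I. k i (y i) (x i)) * f (y(j := b))))"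
  proof (intro sum.cong refl)
    fix b y
    have "(\<Prod>i\<in>insert j I. k i ((y(j := b)) i) ((x(j := c)) i)) = k j b c * (\<Prod>i\<in>I. k i (y i) ((x(j := c)) i))"
      using prod_insert_upd[OF fI jI, of "\<lambda>i z. k i z ((x(j := c)) i)" y b] by simp
    also have "(\<Prod>i\<in>I. k i (y i) ((x(j := c)) i)) = (\<Prod>i\<in>I. k i (y i) (x i))"
      using jI by (intro prod.cong) auto
    finally show "(\<Prod>i\<in>insert j I. k i ((y(j := b)) i) ((x(j := c)) i)) * f (y(j := b))
        = k j b c * ((\<Prod>i\<in>I. k i (y i) (x i)) * f (y(j := b)))" by simp
  qed
  also have "\<dots> = (\<Sum>y\<in>PiE I (\<lambda>_. Om). (\<Prod>i\<in>I. k i (y i) (x i)) * (\<Sum>b\<in>Om. k j b c * f (y(j := b))))"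
    by (subst sum.swap) (simp add: sum_distrib_left algebra_simps)
  also have "\<dots> = noiseI Om mu I r (\<lambda>y. r * f (y(j := c)) + (1 - r) * avgE Om mu j f y) x"
    unfolding noiseI_def
  proof (intro sum.cong refl)
    fix y
    have "(\<Sum>b\<in>Om. k j b c * f (y(j := b)))
       = (\<Sum>b\<in>Om. (if b = c then r * f (y(j := b)) else 0)) + (\<Sum>b\<in>Om. (1 - r) * (mu b * f (y(j := b))))"
      unfolding k_def sum.distrib[symmetric] by (intro sum.cong) (auto simp: algebra_simps)
    also have "\<dots> = r * f (y(j := c)) + (1 - r) * avgE Om mu j f y"
      using c fO by (simp add: avgE_def sum_distrib_left)
    finally show "(\<Prod>i\<in>I. k i (y i) (x i)) * (\<Sum>b\<in>Om. k j b c * f (y(j := b)))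
      = (\<Prod>i\<in>I. r * (if y i = x i then 1 else 0) + (1 - r) * mu (y i)) * (r * f (y(j := c)) + (1 - r) * avgE Om mu j f y)"
      unfolding k_def by simp
  qed
  finally show ?thesis .
qed



lemma sqrt_powr_half: "0 \<le> E \<Longrightarrow> sqrt E powr q = E powr (q/2)"
proof -
  assume E: "0 \<le> E"
  have "sqrt E = E powr (1/2)" using E by (simp add: powr_half_sqrt)
  hence "sqrt E powr q = E powr (1/2 * q)" by (simp add: powr_powr)
  thus ?thesis by simp
qed

lemma perSx:
  assumes P: "fin_prob_space Om mu" and fI: "finite I" and jI: "j \<notin> I" and SI: "S \<subseteq> I"
    and q: "q \<ge> 2" and r0: "0 < rho" and r1: "rho \<le> 1/3"
  shows "(\<Sum>c\<in>Om. mu c * norm2 Om mu (I - S)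
            (derivD Om mu S x (\<lambda>y. (rho/sqrt q) * f (y(j := c)) + (1 - rho/sqrt q) * avgE Om mu j f y)) powr q)
     \<le> norm2 Om mu (insert j I - S) (derivD Om mu S x f) powr q
       + ((rho * (1 + 2 * (q-2)/ln(1/rho))) powr q * q powr (-q/2))
         * (\<Sum>c\<in>Om. mu c * norm2 Om mu (I - S) (derivD Om mu (insert j S) (x(j := c)) f) powr q)"
proof -
  define r where "r = rho/sqrt q"
  define K where "K = (rho * (1 + 2 * (q-2)/ln(1/rho))) powr q * q powr (-q/2)"
  define M where "M = (\<lambda>y::nat \<Rightarrow> 'a. (\<lambda>i. if i \<in> S then x i else y i))"
  define U where "U = (\<lambda>y c. opLS Om mu S f ((M y)(j := c)))"
  define Y where "Y = PiE (I - S) (\<lambda>_. Om)"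
  define w where "w = (\<lambda>y::nat\<Rightarrow>'a. \<Prod>i\<in>I - S. mu (y i))"
  have fO: "finite Om" and mu0: "\<forall>a\<in>Om. mu a \<ge> 0" and mu1: "sum mu Om = 1"
    using P unfolding fin_prob_space_def by auto
  have fS: "finite S" using fI SI finite_subset by blast
  have jS: "j \<notin> S" using jI SI by auto
  have fY: "finite Y" unfolding Y_def using fO fI by (intro finite_PiE) auto
  have w0: "\<forall>y\<in>Y. w y \<ge> 0" unfolding Y_def w_def using mu0 by (auto intro!: prod_nonneg simp: PiE_iff)
  have n2: "norm2 Om mu (I - S) g = sqrt (\<Sum>y\<in>Y. w y * (g y)^2)" for g
    unfolding norm2_def expS_def Y_def w_def ..
  have Aeq: "avgE Om mu j (opLS Om mu S f) (M y) = (\<Sum>b\<in>Om. mu b * U y b)" for y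
    unfolding avgE_def U_def ..
  have da: "derivD Om mu S x (\<lambda>y. r * f (y(j := c)) + (1 - r) * avgE Om mu j f y) y
      = r * U y c + (1 - r) * (\<Sum>b\<in>Om. mu b * U y b)" for c y
  proof -
    have "derivD Om mu S x (\<lambda>y. r * f (y(j := c)) + (1 - r) * avgE Om mu j f y) y
        = opLS Om mu S (\<lambda>z. r * (\<lambda>y. f (y(j := c))) z + (1 - r) * avgE Om mu j f z) (M y)"
      unfolding derivD_def M_def by simp
    also have "\<dots> = r * opLS Om mu S (\<lambda>y. f (y(j := c))) (M y) + (1 - r) * opLS Om mu S (avgE Om mu j f) (M y)"
      by (subst opLS_lin[OF fS]) simp
    also have "opLS Om mu S (\<lambda>y. f (y(j := c))) = (\<lambda>z. opLS Om mu S f (z(j := c)))"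
      by (rule opLS_subst[OF fS jS])
    also have "opLS Om mu S (avgE Om mu j f) = avgE Om mu j (opLS Om mu S f)"
      by (rule avgE_opLS[OF fS, symmetric])
    finally show ?thesis by (simp only: Aeq U_def)
  qed
  have db: "derivD Om mu S x f (y(j := c)) = U y c" for y c
  proof -
    have "(\<lambda>i. if i \<in> S then x i else (y(j := c)) i) = (M y)(j := c)"
      unfolding M_def using jS by (auto simp: fun_eq_iff)
    thus ?thesis unfolding derivD_def U_def by simp
  qed
  have dc: "derivD Om mu (insert j S) (x(j := c)) f y = U y c - (\<Sum>b\<in>Om. mu b * U y b)" for y c
  proof -
    have e: "(\<lambda>i. if i \<in> insert j S then (x(j := c)) i else y i) = (M y)(j := c)"
      unfolding M_def by (auto simp: fun_eq_iff)
    have "derivD Om mu (insert j S) (x(j := c)) f y = opL Om mu j (opLS Om mu S f) ((M y)(j := c))"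
      unfolding derivD_def e opLS_insert[OF fS jS] ..
    also have "\<dots> = U y c - (\<Sum>b\<in>Om. mu b * U y b)"
      unfolding opL_def avgE_def U_def by simp
    finally show ?thesis .
  qed
  have IS: "insert j I - S = insert j (I - S)" using jS by auto
  have jIS: "j \<notin> I - S" using jI by auto
  have fIS: "finite (I - S)" using fI by simp
  have nd: "norm2 Om mu (insert j I - S) (derivD Om mu S x f) = sqrt (\<Sum>c\<in>Om. mu c * (\<Sum>y\<in>Y. w y * (U y c)^2))"
    unfolding norm2_def IS expS_insert[OF fIS jIS] db unfolding expS_def Y_def w_def ..
  have E1: "0 \<le> (\<Sum>y\<in>Y. w y * (g y)^2)" for g using w0 by (intro sum_nonneg) auto
  have E2: "0 \<le> (\<Sum>c\<in>Om. mu c * (\<Sum>y\<in>Y. w y * (U y c)^2))"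
    using mu0 w0 by (intro sum_nonneg mult_nonneg_nonneg) auto
  have key: "(\<Sum>c\<in>Om. mu c * (\<Sum>y\<in>Y. w y * (r * U y c + (1 - r) * (\<Sum>b\<in>Om. mu b * U y b))^2) powr (q/2))
     \<le> (\<Sum>c\<in>Om. mu c * (\<Sum>y\<in>Y. w y * (U y c)^2)) powr (q/2)
       + K * (\<Sum>c\<in>Om. mu c * (\<Sum>y\<in>Y. w y * (U y c - (\<Sum>b\<in>Om. mu b * U y b))^2) powr (q/2))"
    unfolding r_def K_def by (rule KEY[OF fY fO w0 mu0 mu1 q r0 r1])
  show ?thesis
    unfolding r_def[symmetric] K_def[symmetric] n2 nd da dc
    using key by (simp add: sqrt_powr_half[OF E1] sqrt_powr_half[OF E2])
qed



lemma mainInd: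
  assumes P: "fin_prob_space Om mu" and q: "q \<ge> 2" and r0: "0 < rho" and r1: "rho \<le> 1/3"
    and fI: "finite I"
  shows "\<forall>f. expS Om mu I (\<lambda>x. \<bar>noiseI Om mu I (rho/sqrt q) f x\<bar> powr q)
    \<le> (\<Sum>S\<in>Pow I. ((rho * (1 + 2 * (q-2)/ln(1/rho))) powr q * q powr (-q/2)) ^ card S
          * expS Om mu S (\<lambda>x. norm2 Om mu (I - S) (derivD Om mu S x f) powr q))"
  using fI
proof (induction I rule: finite_induct)
  case empty
  show ?case by (simp add: expS_def noiseI_def norm2_def derivD_def)
next
  case (insert j I)
  define r where "r = rho/sqrt q"
  define K where "K = (rho * (1 + 2 * (q-2)/ln(1/rho))) powr q * q powr (-q/2)"
  have fO: "finite Om" and mu0: "\<forall>a\<in>Om. mu a \<ge> 0" and mu1: "sum mu Om = 1"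
    using P unfolding fin_prob_space_def by auto
  have K0: "K \<ge> 0" unfolding K_def by simp
  have IH: "expS Om mu I (\<lambda>x. \<bar>noiseI Om mu I r f x\<bar> powr q)
    \<le> (\<Sum>S\<in>Pow I. K ^ card S * expS Om mu S (\<lambda>x. norm2 Om mu (I - S) (derivD Om mu S x f) powr q))" for f
    using insert.IH unfolding r_def K_def by blast
  show ?case unfolding r_def[symmetric] K_def[symmetric]
  proof
    fix f
    define F where "F = (\<lambda>c y. r * f (y(j := c)) + (1 - r) * avgE Om mu j f y)"
    define N where "N = (\<lambda>S x c. norm2 Om mu (I - S) (derivD Om mu S x (F c)) powr q)"
    define A where "A = (\<lambda>S x. norm2 Om mu (insert j I - S) (derivD Om mu S x f) powr q)"
    define B where "B = (\<lambda>S c x. norm2 Om mu (I - S) (derivD Om mu (insert j S) (x(j := c)) f) powr q)"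
    define T where "T = (\<lambda>S. K ^ card S * expS Om mu S (A S))"
    have "expS Om mu (insert j I) (\<lambda>x. \<bar>noiseI Om mu (insert j I) r f x\<bar> powr q)
        = (\<Sum>c\<in>Om. mu c * expS Om mu I (\<lambda>x. \<bar>noiseI Om mu (insert j I) r f (x(j := c))\<bar> powr q))"
      by (rule expS_insert[OF insert(1) insert(2)])
    also have "\<dots> = (\<Sum>c\<in>Om. mu c * expS Om mu I (\<lambda>x. \<bar>noiseI Om mu I r (F c) x\<bar> powr q))"
      unfolding F_def by (intro sum.cong refl) (simp add: noise_insert[OF insert(1) insert(2) _ fO])
    also have "\<dots> \<le> (\<Sum>c\<in>Om. mu c * (\<Sum>S\<in>Pow I. K ^ card S * expS Om mu S (\<lambda>x. N S x c)))"
      unfolding N_def using mu0 IH by (intro sum_mono mult_left_mono) auto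
    also have "\<dots> = (\<Sum>S\<in>Pow I. K ^ card S * expS Om mu S (\<lambda>x. \<Sum>c\<in>Om. mu c * N S x c))"
      by (simp add: sum_distrib_left sum.swap[of _ Om] expS_sum expS_cmult algebra_simps)
    also have "\<dots> \<le> (\<Sum>S\<in>Pow I. K ^ card S * expS Om mu S (\<lambda>x. A S x + K * (\<Sum>c\<in>Om. mu c * B S c x)))"
    proof (intro sum_mono mult_left_mono expS_mono[OF mu0])
      fix S x assume S: "S \<in> Pow I"
      show "(\<Sum>c\<in>Om. mu c * N S x c) \<le> A S x + K * (\<Sum>c\<in>Om. mu c * B S c x)"
        unfolding N_def A_def B_def F_def r_def K_def
        using perSx[OF P insert(1) insert(2) _ q r0 r1, of S x f] S by auto
      show "0 \<le> K ^ card S" using K0 by simp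
    qed
    also have "\<dots> = (\<Sum>S\<in>Pow I. T S + K ^ card S * K * (\<Sum>c\<in>Om. mu c * expS Om mu S (B S c)))"
    proof (intro sum.cong refl)
      fix S
      have e1: "expS Om mu S (\<lambda>x. A S x + K * (\<Sum>c\<in>Om. mu c * B S c x))
          = 1 * expS Om mu S (A S) + K * expS Om mu S (\<lambda>x. \<Sum>c\<in>Om. mu c * B S c x)"
        using expS_lin[of Om mu S 1 "A S" K "\<lambda>x. \<Sum>c\<in>Om. mu c * B S c x"] by simp
      have e2: "expS Om mu S (\<lambda>x. \<Sum>c\<in>Om. mu c * B S c x) = (\<Sum>c\<in>Om. mu c * expS Om mu S (B S c))"
        by (simp add: expS_sum expS_cmult)
      show "K ^ card S * expS Om mu S (\<lambda>x. A S x + K * (\<Sum>c\<in>Om. mu c * B S c x))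
          = T S + K ^ card S * K * (\<Sum>c\<in>Om. mu c * expS Om mu S (B S c))"
        unfolding T_def e1 e2 by (simp add: algebra_simps)
    qed
    also have "\<dots> = (\<Sum>S\<in>Pow I. T S) + (\<Sum>S\<in>Pow I. T (insert j S))"
    proof -
      have "T (insert j S) = K ^ card S * K * (\<Sum>c\<in>Om. mu c * expS Om mu S (B S c))" if S: "S \<in> Pow I" for S
      proof -
        have fS: "finite S" using S insert(1) finite_subset by auto
        have jS: "j \<notin> S" using S insert(2) by auto
        have e: "insert j I - insert j S = I - S" using insert(2) by auto
        show ?thesis unfolding T_def A_def B_def
          using fS jS by (simp add: expS_insert[OF fS jS] e algebra_simps)
      qed
      thus ?thesis by (simp add: sum.distrib)
    qed
    also have "\<dots> = (\<Sum>S\<in>Pow (insert j I). T S)"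
    proof -
      have inj: "inj_on (insert j) (Pow I)" using insert(2) by (auto simp: inj_on_def)
      have dis: "Pow I \<inter> insert j ` Pow I = {}" using insert(2) by auto
      have "(\<Sum>S\<in>Pow (insert j I). T S) = (\<Sum>S\<in>Pow I. T S) + (\<Sum>S\<in>insert j ` Pow I. T S)"
        unfolding Pow_insert using insert(1) dis by (intro sum.union_disjoint) auto
      also have "(\<Sum>S\<in>insert j ` Pow I. T S) = (\<Sum>S\<in>Pow I. T (insert j S))"
        by (rule sum.reindex[OF inj, unfolded comp_def])
      finally show ?thesis by simp
    qed
    finally show "expS Om mu (insert j I) (\<lambda>x. \<bar>noiseI Om mu (insert j I) r f x\<bar> powr q)
      \<le> (\<Sum>S\<in>Pow (insert j I). K ^ card S * expS Om mu S (\<lambda>x. norm2 Om mu (insert j I - S) (derivD Om mu S x f) powr q))"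
      unfolding T_def A_def .
  qed
qed


lemma coeff_eq:
  fixes beta q :: real and k :: nat
  assumes b: "beta > 0" and q: "q > 0"
  shows "beta powr (q * real k) * q powr (- (q * real k) / 2) = (beta powr q * q powr (-q/2)) ^ k"
proof -
  have "beta powr (q * real k) = (beta powr q) powr (real k)" by (simp add: powr_powr)
  also have "\<dots> = (beta powr q) ^ k" using b by (simp add: powr_realpow)
  finally have e1: "beta powr (q * real k) = (beta powr q) ^ k" .
  have "- (q * real k) / 2 = (-q/2) * real k" by simp
  hence "q powr (- (q * real k) / 2) = (q powr (-q/2)) powr (real k)" by (simp add: powr_powr)
  also have "\<dots> = (q powr (-q/2)) ^ k" using q by (simp add: powr_realpow)
  finally have e2: "q powr (- (q * real k) / 2) = (q powr (-q/2)) ^ k" .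
  show ?thesis unfolding e1 e2 by (simp add: power_mult_distrib)
qed

theorem mainTheorem11:
  fixes Om :: "'a set" and mu :: "'a \<Rightarrow> real" and n :: nat
    and rho q :: real and f :: "(nat \<Rightarrow> 'a) \<Rightarrow> real"
  assumes "fin_prob_space Om mu"
    and "0 < rho" and "rho \<le> 1/3" and "q \<ge> 2"
  shows "normq_pow Om mu {0..<n} q (noiseT Om mu n (rho / sqrt q) f)
    \<le> (\<Sum>S\<in>Pow {0..<n}.
          (rho * (1 + 2 * (q - 2) / ln (1 / rho))) powr (q * card S)
          * q powr (- (q * card S) / 2)
          * expS Om mu S (\<lambda>x. norm2 Om mu ({0..<n} - S) (derivD Om mu S x f) powr q))"
proof -
  define beta where "beta = rho * (1 + 2 * (q - 2) / ln (1 / rho))"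
  have L0: "ln (1/rho) > 0" using assms by simp
  have bpos: "beta > 0" unfolding beta_def using assms L0 by (intro mult_pos_pos add_pos_nonneg) auto
  have qpos: "q > 0" using assms by simp
  have M: "expS Om mu {0..<n} (\<lambda>x. \<bar>noiseI Om mu {0..<n} (rho/sqrt q) f x\<bar> powr q)
    \<le> (\<Sum>S\<in>Pow {0..<n}. (beta powr q * q powr (-q/2)) ^ card S
          * expS Om mu S (\<lambda>x. norm2 Om mu ({0..<n} - S) (derivD Om mu S x f) powr q))"
    using mainInd[OF assms(1) assms(4) assms(2) assms(3), of "{0..<n}"] unfolding beta_def by simp
  show ?thesis
    unfolding beta_def[symmetric] normq_pow_def noiseT_I coeff_eq[OF bpos qpos] using M .
qed

end
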